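(* Let $G=(V,E)$ be a graph with $|V|=n$, let $k\ge1$, and suppose $N_1,\dots,N_r$ is an $r$-partition of $G$. Then $$M^G_{k,n}\le \sum_{i=1}^r M^C_{k,|N_i|}+r .$$ In particular, $M^G_{k,n}=O(rk\log(n/k))+r$.
   Context: Let $G=(V,E)$ be a simple undirected graph. A set $S\subseteq V$ is a hub for $U\subseteq V$ if the induced subgraph $G_S$ is connected and every $u\in U$ has a neighbor $s\in S$, i.e. $\{u,s\}\in E$. Pairwise disjoint sets $N_1,\dots,N_r\subseteq V$ form an $r$-partition of $G$ if $\bigcup_{i=1}^r N_i=V$ and, for every $i$, $V\setminus N_i$ is a hub for $N_i$. A measurement matrix for $G$ is a $0$-$1$ matrix with columns indexed by $V$ in which every nonzero row has a support that induces a connected subgraph of $G$. A vector is $k$-sparse if it has at most $k$ nonzero entries. $A$ identifies all $k$-sparse vectors if $Ax_1\ne Ax_2$ for every two distinct $k$-sparse $x_1,x_2\in\mathbb{R}^n$. $M^G_{k,n}$ is the minimum number of rows of a measurement matrix for $G$ that identifies all $k$-sparse vectors. $M^C_{k,N}$ is the minimum number of rows of an arbitrary $0$-$1$ matrix with $N$ columns that identifies all $k$-sparse vectors in $\mathbb{R}^N$; it satisfies $M^C_{k,N}=O(k\log(N/k))$. *)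

theory Defs
  imports Complex_Main
begin

definition simple_graph :: "'a set \<Rightarrow> 'a set set \<Rightarrow> bool" where
  "simple_graph V E \<longleftrightarrow> finite V \<and> (\<forall>e\<in>E. e \<subseteq> V \<and> card e = 2)"

definition induced_connected :: "'a set set \<Rightarrow> 'a set \<Rightarrow> bool" where
  "induced_connected E S \<longleftrightarrow>
     (\<forall>u\<in>S. \<forall>v\<in>S. (u, v) \<in> {(x, y). x \<in> S \<and> y \<in> S \<and> {x, y} \<in> E}\<^sup>*)"

definition is_hub :: "'a set set \<Rightarrow> 'a set \<Rightarrow> 'a set \<Rightarrow> bool" where
  "is_hub E S U \<longleftrightarrow> induced_connected E S \<and> (\<forall>u\<in>U. \<exists>s\<in>S. {u, s} \<in> E)"

definition is_r_partition :: "'a set \<Rightarrow> 'a set set \<Rightarrow> nat \<Rightarrow> (nat \<Rightarrow> 'a set) \<Rightarrow> bool" where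
  "is_r_partition V E r N \<longleftrightarrow>
     (\<forall>i<r. \<forall>j<r. i \<noteq> j \<longrightarrow> N i \<inter> N j = {}) \<and>
     (\<Union>i<r. N i) = V \<and>
     (\<forall>i<r. is_hub E (V - N i) (N i))"

text \<open>A 0-1 matrix with columns indexed by a set C is represented by the list of the
  supports of its rows; the product with a vector x is the list of row sums.\<close>
definition mat_apply :: "'a set list \<Rightarrow> ('a \<Rightarrow> real) \<Rightarrow> real list" where
  "mat_apply A x = map (\<lambda>R. \<Sum>v\<in>R. x v) A"

definition sparse_vec :: "'a set \<Rightarrow> nat \<Rightarrow> ('a \<Rightarrow> real) \<Rightarrow> bool" where
  "sparse_vec C k x \<longleftrightarrow> (\<forall>v. v \<notin> C \<longrightarrow> x v = 0) \<and> card {v\<in>C. x v \<noteq> 0} \<le> k"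

definition identifies :: "'a set \<Rightarrow> nat \<Rightarrow> 'a set list \<Rightarrow> bool" where
  "identifies C k A \<longleftrightarrow>
     (\<forall>x1 x2. sparse_vec C k x1 \<longrightarrow> sparse_vec C k x2 \<longrightarrow> x1 \<noteq> x2 \<longrightarrow>
        mat_apply A x1 \<noteq> mat_apply A x2)"

definition measurement_matrix :: "'a set \<Rightarrow> 'a set set \<Rightarrow> 'a set list \<Rightarrow> bool" where
  "measurement_matrix V E A \<longleftrightarrow>
     (\<forall>R\<in>set A. R \<subseteq> V \<and> (R \<noteq> {} \<longrightarrow> induced_connected E R))"

definition MG :: "'a set \<Rightarrow> 'a set set \<Rightarrow> nat \<Rightarrow> nat" where
  "MG V E k = (LEAST m. \<exists>A. length A = m \<and> measurement_matrix V E A \<and> identifies V k A)"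

definition MC :: "nat \<Rightarrow> nat \<Rightarrow> nat" where
  "MC k N = (LEAST m. \<exists>A. length A = m \<and> (\<forall>R\<in>set A. R \<subseteq> {..<N}) \<and> identifies {..<N} k A)"

end

theory Submission
  imports Defs
begin

lemma hub_conn:
  assumes "is_hub E S U" "U' \<subseteq> U"
  shows "induced_connected E (U' \<union> S)"
proof -
  let ?T = "U' \<union> S"
  let ?R = "{(x, y). x \<in> ?T \<and> y \<in> ?T \<and> {x, y} \<in> E}"
  let ?RS = "{(x, y). x \<in> S \<and> y \<in> S \<and> {x, y} \<in> E}"
  have sub: "?RS\<^sup>* \<subseteq> ?R\<^sup>*" by (rule rtrancl_mono) auto
  have conS: "\<forall>u\<in>S. \<forall>v\<in>S. (u, v) \<in> ?RS\<^sup>*" using assms(1) unfolding is_hub_def induced_connected_def by blast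
  have near: "\<exists>s\<in>S. (w, s) \<in> ?R\<^sup>* \<and> (s, w) \<in> ?R\<^sup>*" if "w \<in> ?T" for w
  proof (cases "w \<in> S")
    case True then show ?thesis by blast
  next
    case False
    then have "w \<in> U" using that assms(2) by blast
    then obtain s where s: "s \<in> S" "{w, s} \<in> E" using assms(1) unfolding is_hub_def by blast
    then have "(w, s) \<in> ?R" "(s, w) \<in> ?R" using that by (auto simp: insert_commute)
    then show ?thesis using s by blast
  qed
  show ?thesis unfolding induced_connected_def
  proof (intro ballI)
    fix u v assume "u \<in> ?T" "v \<in> ?T"
    then obtain su sv where "su \<in> S" "sv \<in> S" "(u, su) \<in> ?R\<^sup>*" "(sv, v) \<in> ?R\<^sup>*"
      using near by blast
    moreover have "(su, sv) \<in> ?R\<^sup>*" using conS sub \<open>su \<in> S\<close> \<open>sv \<in> S\<close> by blast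
    ultimately show "(u, v) \<in> ?R\<^sup>*" by (meson rtrancl_trans)
  qed
qed

lemma MC_attained:
  "\<exists>A. length A = MC k c \<and> (\<forall>R\<in>set A. R \<subseteq> {..<c}) \<and> identifies {..<c} k A"
proof -
  let ?A = "map (\<lambda>j. {j}) [0..<c]"
  have "identifies {..<c} k ?A"
    unfolding identifies_def
  proof (intro allI impI)
    fix x1 x2 :: "nat \<Rightarrow> real"
    assume s1: "sparse_vec {..<c} k x1" and s2: "sparse_vec {..<c} k x2" and ne: "x1 \<noteq> x2"
    then obtain v where v: "x1 v \<noteq> x2 v" by auto
    then have "v < c" using s1 s2 unfolding sparse_vec_def by fastforce
    then have "nth (mat_apply ?A x1) v \<noteq> nth (mat_apply ?A x2) v"
      using v by (simp add: mat_apply_def)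
    then show "mat_apply ?A x1 \<noteq> mat_apply ?A x2" by metis
  qed
  then have "\<exists>m A. length A = m \<and> (\<forall>R\<in>set A. R \<subseteq> {..<c}) \<and> identifies {..<c} k A"
    by (intro exI[of _ c] exI[of _ ?A]) auto
  from LeastI_ex[OF this] show ?thesis unfolding MC_def by blast
qed

lemma sum_upt_list: "sum_list (map f [0..<r]) = (\<Sum>i<r. f i)"
  by (induction r) auto

theorem theorem7:
  fixes V :: "'a set" and E :: "'a set set" and k r :: nat and N :: "nat \<Rightarrow> 'a set"
  assumes "simple_graph V E"
    and "k \<ge> 1"
    and "is_r_partition V E r N"
  shows "MG V E k \<le> (\<Sum>i<r. MC k (card (N i))) + r"
proof -
  have finV: "finite V" using assms(1) unfolding simple_graph_def by blast
  have disj: "\<And>i j. i<r \<Longrightarrow> j<r \<Longrightarrow> i \<noteq> j \<Longrightarrow> N i \<inter> N j = {}"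
    and cover: "(\<Union>i<r. N i) = V" and hub: "\<And>i. i<r \<Longrightarrow> is_hub E (V - N i) (N i)"
    using assms(3) unfolding is_r_partition_def by blast+
  have NV: "\<And>i. i < r \<Longrightarrow> N i \<subseteq> V" using cover by blast
  have finN: "\<And>i. i < r \<Longrightarrow> finite (N i)" using NV finV finite_subset by blast
  have "\<forall>i. \<exists>h. i < r \<longrightarrow> bij_betw h {..<card (N i)} (N i)"
    using ex_bij_betw_nat_finite finN by (metis atLeast0LessThan)
  then obtain f where f: "\<And>i. i < r \<Longrightarrow> bij_betw (f i) {..<card (N i)} (N i)" by metis
  have "\<forall>i. \<exists>A. length A = MC k (card (N i)) \<and> (\<forall>R\<in>set A. R \<subseteq> {..<card (N i)})
            \<and> identifies {..<card (N i)} k A"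
    using MC_attained by blast
  then obtain AA where AAlen: "\<And>i. length (AA i) = MC k (card (N i))"
    and AAsub: "\<And>i R. R \<in> set (AA i) \<Longrightarrow> R \<subseteq> {..<card (N i)}"
    and AAid: "\<And>i. identifies {..<card (N i)} k (AA i)"
    by metis
  define B where "B i = map (\<lambda>R. f i ` R \<union> (V - N i)) (AA i) @ [V - N i]" for i
  define A where "A = concat (map B [0..<r])"
  have lenA: "length A = (\<Sum>i<r. MC k (card (N i))) + r"
    unfolding A_def length_concat map_map
    by (simp add: o_def B_def AAlen sum_upt_list sum.distrib)
      (simp add: sum_Suc)
  have setA: "R \<in> set A \<longleftrightarrow> (\<exists>i<r. R \<in> set (B i))" for R
    unfolding A_def by auto
  have mm: "measurement_matrix V E A"
    unfolding measurement_matrix_def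
  proof
    fix R assume "R \<in> set A"
    then obtain i where i: "i < r" "R \<in> set (B i)" using setA by blast
    then consider "R = V - N i" | Q where "Q \<in> set (AA i)" "R = f i ` Q \<union> (V - N i)"
      unfolding B_def by auto
    then show "R \<subseteq> V \<and> (R \<noteq> {} \<longrightarrow> induced_connected E R)"
    proof cases
      case 1
      then show ?thesis using hub[OF i(1)] hub_conn[of E "V - N i" "N i" "{}"] by auto
    next
      case 2
      have "f i ` Q \<subseteq> N i" using AAsub[OF 2(1)] f[OF i(1)] unfolding bij_betw_def by blast
      then show ?thesis using 2 hub[OF i(1)] hub_conn[of E "V - N i" "N i" "f i ` Q"] NV[OF i(1)]
        by blast
    qed
  qed
  have idA: "identifies V k A"
    unfolding identifies_def
  proof (intro allI impI)
    fix x1 x2 :: "'a \<Rightarrow> real"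
    assume s1: "sparse_vec V k x1" and s2: "sparse_vec V k x2" and ne: "x1 \<noteq> x2"
    show "mat_apply A x1 \<noteq> mat_apply A x2"
    proof
      assume eq: "mat_apply A x1 = mat_apply A x2"
      have rows: "\<And>R. R \<in> set A \<Longrightarrow> (\<Sum>v\<in>R. x1 v) = (\<Sum>v\<in>R. x2 v)"
        using eq unfolding mat_apply_def map_eq_conv by blast
      have "x1 = x2"
      proof
        fix v
        show "x1 v = x2 v"
        proof (cases "v \<in> V")
          case False then show ?thesis using s1 s2 unfolding sparse_vec_def by auto
        next
          case True
          then obtain i where i: "i < r" "v \<in> N i" using cover by blast
          let ?c = "card (N i)"
          have bij: "bij_betw (f i) {..<?c} (N i)" using f[OF i(1)] .
          have inj: "inj_on (f i) {..<?c}" using bij bij_betw_def by blast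
          define y where "y x t = (if t < ?c then x (f i t) else 0)" for x :: "'a \<Rightarrow> real" and t
          have ysp: "sparse_vec {..<?c} k (y x)" if sx: "sparse_vec V k x" for x
            unfolding sparse_vec_def
          proof
            show "\<forall>t. t \<notin> {..<?c} \<longrightarrow> y x t = 0" by (simp add: y_def)
            have "card {t \<in> {..<?c}. y x t \<noteq> 0} = card (f i ` {t \<in> {..<?c}. y x t \<noteq> 0})"
              by (rule card_image[symmetric]) (rule inj_on_subset[OF inj], blast)
            also have "\<dots> \<le> card {v \<in> V. x v \<noteq> 0}"
              apply (rule card_mono) using finV apply simp
              using bij NV[OF i(1)] unfolding bij_betw_def y_def by auto
            also have "\<dots> \<le> k" using sx unfolding sparse_vec_def by blast
            finally show "card {t \<in> {..<?c}. y x t \<noteq> 0} \<le> k" .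
          qed
          have rowsum: "(\<Sum>t\<in>Q. y x t) = (\<Sum>u\<in>f i ` Q \<union> (V - N i). x u) - (\<Sum>u\<in>V - N i. x u)"
            if Q: "Q \<in> set (AA i)" for Q x
          proof -
            have Qs: "Q \<subseteq> {..<?c}" using AAsub[OF Q] .
            have fQ: "f i ` Q \<subseteq> N i" using Qs bij unfolding bij_betw_def by blast
            have finQ: "finite Q" using Qs finite_subset by blast
            have "(\<Sum>u\<in>f i ` Q \<union> (V - N i). x u) = (\<Sum>u\<in>f i ` Q. x u) + (\<Sum>u\<in>V - N i. x u)"
              by (rule sum.union_disjoint) (use finQ finV fQ in auto)
            moreover have "(\<Sum>u\<in>f i ` Q. x u) = (\<Sum>t\<in>Q. x (f i t))"
              by (rule sum.reindex_cong[OF inj_on_subset[OF inj Qs]]) auto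
            moreover have "(\<Sum>t\<in>Q. y x t) = (\<Sum>t\<in>Q. x (f i t))"
              by (rule sum.cong) (use Qs in \<open>auto simp: y_def\<close>)
            ultimately show ?thesis by simp
          qed
          have inB: "V - N i \<in> set A" using i(1) setA unfolding B_def by auto
          have inB2: "f i ` Q \<union> (V - N i) \<in> set A" if "Q \<in> set (AA i)" for Q
            using i(1) setA that unfolding B_def by auto
          have "mat_apply (AA i) (y x1) = mat_apply (AA i) (y x2)"
            unfolding mat_apply_def map_eq_conv
          proof
            fix Q assume Q: "Q \<in> set (AA i)"
            show "(\<Sum>t\<in>Q. y x1 t) = (\<Sum>t\<in>Q. y x2 t)"
              using rowsum[OF Q, of x1] rowsum[OF Q, of x2] rows[OF inB] rows[OF inB2[OF Q]]
              by simp
          qed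
          then have "y x1 = y x2"
            using AAid[of i] ysp[OF s1] ysp[OF s2] unfolding identifies_def by blast
          moreover obtain t where "t < ?c" "v = f i t" using bij i(2) unfolding bij_betw_def by auto
          ultimately show ?thesis unfolding y_def by (metis (full_types))
        qed
      qed
      then show False using ne by blast
    qed
  qed
  have "MG V E k \<le> length A"
    unfolding MG_def by (rule Least_le) (use mm idA in blast)
  then show ?thesis using lenA by simp
qed

end
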